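(* Let $\Omega\subset\mathbb{R}^d$ be a bounded connected open set with smooth boundary and $\mathbf{B}\in C^0(\overline\Omega,\mathbb{R}^{n\times d\times n})$. Then the integer $\dim E^x_{\mathbf{B}}\in\{0,\dots,n\}$ does not depend on $x\in\Omega$: $\dim E^{x_1}_{\mathbf{B}}=\dim E^{x_2}_{\mathbf{B}}$ for all $x_1,x_2\in\Omega$.
   Context: $\Gamma(x,y)=\{\boldsymbol\gamma\in C^1([0,1],\Omega):\boldsymbol\gamma(0)=x,\boldsymbol\gamma(1)=y\}$. For $\boldsymbol\gamma\in\Gamma(x,y)$, $R^{\boldsymbol\gamma}_{\mathbf{B}}(\mathbf{v})=\boldsymbol\varphi_{\mathbf{v}}(1)$ where $\boldsymbol\varphi_{\mathbf{v}}$ solves $\varphi_i'(t)=-\sum_{j,k}\mathbf{B}_{ijk}(\boldsymbol\gamma(t))\varphi_k(t)\gamma_j'(t)$ on $[0,1]$, $\boldsymbol\varphi(0)=\mathbf{v}$. $E^x_{\mathbf{B}}=\{\mathbf{v}\in\mathbb{R}^n:\forall y\in\Omega,\ \forall\boldsymbol\gamma_1,\boldsymbol\gamma_2\in\Gamma(x,y),\ R^{\boldsymbol\gamma_1}_{\mathbf{B}}(\mathbf{v})=R^{\boldsymbol\gamma_2}_{\mathbf{B}}(\mathbf{v})\}$, a linear subspace of $\mathbb{R}^n$. *)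

theory Defs
  imports "HOL-Analysis.Analysis"
begin

fun Ck_on :: "nat \<Rightarrow> (real^'d) set \<Rightarrow> (real^'d \<Rightarrow> real) \<Rightarrow> bool" where
  "Ck_on 0 U f = continuous_on U f"
| "Ck_on (Suc k) U f = (f differentiable_on U \<and>
      (\<forall>i. Ck_on k U (\<lambda>x. frechet_derivative f (at x) (axis i 1))))"

definition smooth_on :: "(real^'d) set \<Rightarrow> (real^'d \<Rightarrow> real) \<Rightarrow> bool" where
  "smooth_on U f \<longleftrightarrow> (\<forall>k. Ck_on k U f)"

definition smooth_boundary :: "(real^'d) set \<Rightarrow> bool" where
  "smooth_boundary \<Omega> \<longleftrightarrow>
     (\<forall>p\<in>frontier \<Omega>. \<exists>U \<rho>. open U \<and> p \<in> U \<and> smooth_on U \<rho> \<and>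
        (\<forall>x\<in>U. frechet_derivative \<rho> (at x) \<noteq> (\<lambda>_. 0)) \<and>
        \<Omega> \<inter> U = {x\<in>U. \<rho> x < 0})"

definition paths_C1 :: "(real^'d) set \<Rightarrow> real^'d \<Rightarrow> real^'d \<Rightarrow> (real \<Rightarrow> real^'d) set" where
  "paths_C1 \<Omega> x y = {\<gamma>. (\<exists>\<gamma>'. continuous_on {0..1} \<gamma>' \<and>
        (\<forall>t\<in>{0..1}. (\<gamma> has_vector_derivative \<gamma>' t) (at t within {0..1})))
      \<and> \<gamma> ` {0..1} \<subseteq> \<Omega> \<and> \<gamma> 0 = x \<and> \<gamma> 1 = y}"

text \<open>B x $ i $ j $ k is the tensor entry B_ijk(x). phi solves the transport ODE
  phi_i' = - sum_{j,k} B_ijk(gamma) phi_k gamma_j'.\<close>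
definition transport_ode ::
  "(real^'d \<Rightarrow> real^'n^'d^'n) \<Rightarrow> (real \<Rightarrow> real^'d) \<Rightarrow> real^'n \<Rightarrow> (real \<Rightarrow> real^'n) \<Rightarrow> bool" where
  "transport_ode B \<gamma> v \<phi> \<longleftrightarrow> \<phi> 0 = v \<and>
     (\<forall>t\<in>{0..1}. (\<phi> has_vector_derivative
        (\<chi> i. - (\<Sum>j\<in>UNIV. \<Sum>k\<in>UNIV. B (\<gamma> t) $ i $ j $ k * \<phi> t $ k *
               vector_derivative \<gamma> (at t within {0..1}) $ j))) (at t within {0..1}))"

definition transport :: "(real^'d \<Rightarrow> real^'n^'d^'n) \<Rightarrow> (real \<Rightarrow> real^'d) \<Rightarrow> real^'n \<Rightarrow> real^'n" where
  "transport B \<gamma> v = (THE w. \<exists>\<phi>. transport_ode B \<gamma> v \<phi> \<and> w = \<phi> 1)"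

definition E_B :: "(real^'d) set \<Rightarrow> (real^'d \<Rightarrow> real^'n^'d^'n) \<Rightarrow> real^'d \<Rightarrow> (real^'n) set" where
  "E_B \<Omega> B x = {v. \<forall>y\<in>\<Omega>. \<forall>\<gamma>1\<in>paths_C1 \<Omega> x y. \<forall>\<gamma>2\<in>paths_C1 \<Omega> x y.
       transport B \<gamma>1 v = transport B \<gamma>2 v}"

end

theory Submission
  imports Defs
begin


lemma mat_bound:
  fixes c :: "real \<Rightarrow> real^'n^'n"
  assumes "continuous_on {0..1} c"
  shows "\<exists>M\<ge>0. \<forall>t\<in>{0..1}. \<forall>x. norm (c t *v x) \<le> M * norm x"
proof -
  let ?g = "\<lambda>t. (\<Sum>i\<in>UNIV. \<Sum>j\<in>UNIV. \<bar>c t $ i $ j\<bar>)"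
  have "continuous_on {0..1} (\<lambda>t. c t $ i $ j)" for i j
    using assms by (intro continuous_on_component) 
  then have "continuous_on {0..1} ?g"
    by (intro continuous_on_sum continuous_on_rabs) auto
  then have "compact (?g ` {0..1})" by (rule compact_continuous_image) simp
  then obtain K where K: "\<forall>y\<in>?g ` {0..1}. norm y \<le> K"
    using compact_imp_bounded bounded_iff by metis
  show ?thesis
  proof (intro exI[of _ "max K 0"] conjI ballI allI)
    fix t x assume t: "t \<in> {0..1::real}"
    have "norm (c t *v x) \<le> onorm ((*v) (c t)) * norm x"
      by (rule onorm[OF matrix_vector_mul_bounded_linear])
    also have "\<dots> \<le> ?g t * norm x"
      by (rule mult_right_mono[OF onorm_le_matrix_component_sum]) simp
    also have "?g t \<le> max K 0" using K t by force
    then have "?g t * norm x \<le> max K 0 * norm x" by (simp add: mult_right_mono)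
    finally show "norm (c t *v x) \<le> max K 0 * norm x" .
  qed simp
qed


lemma deriv_interior:
  assumes "\<forall>t\<in>{0..1}. (f has_real_derivative f' t) (at t within {0..1})"
    and "0 < s" "s < 1"
  shows "(f has_real_derivative f' s) (at s)"
proof -
  have "(f has_real_derivative f' s) (at s within {0<..<1})"
    using assms by (intro DERIV_subset[of _ _ _ "{0..1}", OF bspec[OF assms(1)]]) auto
  moreover have "at s within {0<..<1} = at s" using assms by (intro at_within_open) auto
  ultimately show ?thesis by simp
qed

lemma gronwall_zero:
  fixes f :: "real \<Rightarrow> real"
  assumes d: "\<forall>t\<in>{0..1}. (f has_real_derivative f' t) (at t within {0..1})"
    and b: "\<forall>t\<in>{0..1}. \<bar>f' t\<bar> \<le> L * f t"
    and nn: "\<forall>t\<in>{0..1}. 0 \<le> f t"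
    and t0: "t0 \<in> {0..1}" "f t0 = 0"
    and t: "t \<in> {0..1}"
  shows "f t = 0"
proof -
  have cont: "continuous_on {0..1} f"
    using d by (auto simp: continuous_on_eq_continuous_within intro: DERIV_continuous)
  show ?thesis
  proof (cases "t0 \<le> t")
    case True
    let ?g = "\<lambda>s. - (exp (- L * s) * f s)"
    have "?g t0 \<le> ?g t"
    proof (rule DERIV_nonneg_imp_increasing_open[of t0 t ?g, OF True])
      fix s assume s: "t0 < s" "s < t"
      then have s01: "0 < s" "s < 1" using t0 t by auto
      have "(?g has_real_derivative - (exp (- L * s) * (- L) * f s + exp (- L * s) * f' s)) (at s)"
        using deriv_interior[OF d s01] by (auto intro!: derivative_eq_intros)
      moreover have "0 \<le> - (exp (- L * s) * (- L) * f s + exp (- L * s) * f' s)"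
      proof -
        have "\<bar>f' s\<bar> \<le> L * f s" using b s01 by auto
        then have "f' s \<le> L * f s" by linarith
        then have "exp (- L * s) * f' s \<le> exp (- L * s) * (L * f s)" by simp
        then show ?thesis by (simp add: algebra_simps)
      qed
      ultimately show "\<exists>y. (?g has_real_derivative y) (at s) \<and> 0 \<le> y" by blast
    next
      show "continuous_on {t0..t} ?g"
        using cont t0 t by (intro continuous_intros continuous_on_subset[OF cont]) auto
    qed
    then have "f t \<le> 0" using t0 by (simp add: mult_le_0_iff)
    then show ?thesis using nn t by force
  next
    case False
    let ?g = "\<lambda>s. exp (L * s) * f s"
    have "?g t \<le> ?g t0"
    proof (rule DERIV_nonneg_imp_increasing_open[of t t0 ?g])
      show "t \<le> t0" using False by simp
      fix s assume s: "t < s" "s < t0"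
      then have s01: "0 < s" "s < 1" using t0 t by auto
      have "(?g has_real_derivative (exp (L * s) * L * f s + exp (L * s) * f' s)) (at s)"
        using deriv_interior[OF d s01] by (auto intro!: derivative_eq_intros)
      moreover have "0 \<le> exp (L * s) * L * f s + exp (L * s) * f' s"
      proof -
        have "\<bar>f' s\<bar> \<le> L * f s" using b s01 by auto
        then have "- f' s \<le> L * f s" by linarith
        then have "exp (L * s) * (- f' s) \<le> exp (L * s) * (L * f s)" by (rule mult_left_mono) simp
        then show ?thesis by (simp add: algebra_simps)
      qed
      ultimately show "\<exists>y. (?g has_real_derivative y) (at s) \<and> 0 \<le> y" by blast
    next
      show "continuous_on {t..t0} ?g"
        using cont t0 t by (intro continuous_intros continuous_on_subset[OF cont]) auto
    qed
    then have "f t \<le> 0" using t0 by (simp add: mult_le_0_iff)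
    then show ?thesis using nn t by force
  qed
qed

lemma ode_zero:
  fixes c :: "real \<Rightarrow> real^'n^'n"
  assumes c: "continuous_on {0..1} c"
    and d: "\<forall>t\<in>{0..1}. (\<phi> has_vector_derivative c t *v \<phi> t) (at t within {0..1})"
    and t0: "t0 \<in> {0..1}" "\<phi> t0 = 0"
    and t: "t \<in> {0..1}"
  shows "\<phi> t = 0"
proof -
  obtain M where M: "M \<ge> 0" "\<forall>t\<in>{0..1}. \<forall>x. norm (c t *v x) \<le> M * norm x"
    using mat_bound[OF c] by blast
  let ?f = "\<lambda>t. \<phi> t \<bullet> \<phi> t"
  let ?f' = "\<lambda>t. (c t *v \<phi> t) \<bullet> \<phi> t + \<phi> t \<bullet> (c t *v \<phi> t)"
  have "\<forall>t\<in>{0..1}. (?f has_real_derivative ?f' t) (at t within {0..1})"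
  proof
    fix t :: real assume "t \<in> {0..1}"
    then have "(\<phi> has_vector_derivative c t *v \<phi> t) (at t within {0..1})" using d by blast
    then have "(\<phi> has_derivative (\<lambda>h. h *\<^sub>R (c t *v \<phi> t))) (at t within {0..1})"
      by (simp add: has_vector_derivative_def)
    then have "(?f has_derivative (\<lambda>h. \<phi> t \<bullet> (h *\<^sub>R (c t *v \<phi> t)) + h *\<^sub>R (c t *v \<phi> t) \<bullet> \<phi> t)) (at t within {0..1})"
      by (intro has_derivative_inner)
    then show "(?f has_real_derivative ?f' t) (at t within {0..1})"
      unfolding has_field_derivative_def
      by (rule has_derivative_eq_rhs) (auto simp: fun_eq_iff inner_commute algebra_simps)
  qed
  moreover have "\<forall>t\<in>{0..1}. \<bar>?f' t\<bar> \<le> (2*M) * ?f t"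
  proof
    fix t :: real assume t: "t \<in> {0..1}"
    have "\<bar>?f' t\<bar> = 2 * \<bar>\<phi> t \<bullet> (c t *v \<phi> t)\<bar>" by (simp add: inner_commute)
    also have "\<dots> \<le> 2 * (norm (\<phi> t) * norm (c t *v \<phi> t))"
      by (simp add: Cauchy_Schwarz_ineq2)
    also have "\<dots> \<le> 2 * (norm (\<phi> t) * (M * norm (\<phi> t)))"
      using M t by (simp add: mult_left_mono)
    also have "\<dots> = (2*M) * ?f t" by (simp add: power2_norm_eq_inner[symmetric] power2_eq_square)
    finally show "\<bar>?f' t\<bar> \<le> (2*M) * ?f t" .
  qed
  ultimately have "?f t = 0"
    using gronwall_zero[of ?f ?f' "2*M" t0 t] t0 t by simp
  then show ?thesis by simp
qed


lemma cont_mv: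
  fixes c :: "real \<Rightarrow> real^'n^'n"
  assumes "continuous_on S c" "continuous_on S p"
  shows "continuous_on S (\<lambda>s. c s *v p s)"
  unfolding matrix_vector_mult_def
  by (intro continuous_on_vec_lambda continuous_on_sum continuous_on_mult
      continuous_on_component assms)

lemma integ01:
  fixes g :: "real \<Rightarrow> 'a::banach"
  assumes "continuous_on {0..1} g" "t \<in> {0..1}"
  shows "g integrable_on {0..t}"
  using assms by (intro integrable_continuous_interval continuous_on_subset[OF assms(1)]) auto

primrec pic :: "(real \<Rightarrow> real^'n^'n) \<Rightarrow> real^'n \<Rightarrow> nat \<Rightarrow> real \<Rightarrow> real^'n" where
  "pic c v 0 = (\<lambda>t. v)"
| "pic c v (Suc k) = (\<lambda>t. v + integral {0..t} (\<lambda>s. c s *v pic c v k s))"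

lemma pic_cont:
  assumes "continuous_on {0..1} c"
  shows "continuous_on {0..1} (pic c v k)"
proof (induction k)
  case 0 then show ?case by simp
next
  case (Suc k)
  have "continuous_on {0..1} (\<lambda>s. c s *v pic c v k s)"
    by (rule cont_mv[OF assms Suc])
  then have "continuous_on {0..1} (\<lambda>t. integral {0..t} (\<lambda>s. c s *v pic c v k s))"
    by (intro indefinite_integral_continuous_1 integrable_continuous_interval)
  then show ?case by (simp add: continuous_on_add continuous_on_const)
qed

lemma pow_integral:
  fixes C M :: real and k :: nat
  assumes "t \<ge> 0"
  shows "((\<lambda>s. M * (C * (M * s) ^ Suc k / fact (Suc k))) has_integral (C * (M * t) ^ Suc (Suc k) / fact (Suc (Suc k)))) {0..t}"
proof -
  have "((\<lambda>s. C * (M * s) ^ Suc (Suc k) / fact (Suc (Suc k))) has_vector_derivative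
           M * (C * (M * s) ^ Suc k / fact (Suc k))) (at s within {0..t})" for s
  proof -
    have "((\<lambda>s. C * (M * s) ^ Suc (Suc k) / fact (Suc (Suc k))) has_real_derivative
           C * (real (Suc (Suc k)) * (M * s) ^ Suc k * M) / fact (Suc (Suc k))) (at s within {0..t})"
      by (auto intro!: derivative_eq_intros simp del: power_Suc fact_Suc)
    moreover have "C * (real (Suc (Suc k)) * (M * s) ^ Suc k * M) / fact (Suc (Suc k)) = M * (C * (M * s) ^ Suc k / fact (Suc k))"
    proof -
      let ?a = "real (Suc (Suc k))" and ?X = "(M * s) ^ Suc k"
      have a: "fact (Suc (Suc k)) = ?a * fact (Suc k)" by (simp only: fact_Suc of_nat_mult)
      have "C * (?a * ?X * M) / fact (Suc (Suc k)) = (?a * (M * C * ?X)) / (?a * fact (Suc k))"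
        unfolding a by (simp add: ac_simps)
      also have "\<dots> = (M * C * ?X) / fact (Suc k)"
        by (rule mult_divide_mult_cancel_left) simp
      finally show ?thesis by simp
    qed
    ultimately show ?thesis by (simp add: has_real_derivative_iff_has_vector_derivative del: power_Suc fact_Suc)
  qed
  from fundamental_theorem_of_calculus[OF assms this]
  show ?thesis by simp
qed


lemma pic_diff:
  fixes c :: "real \<Rightarrow> real^'n^'n"
  assumes c: "continuous_on {0..1} c"
    and M: "M \<ge> 0" "\<forall>t\<in>{0..1}. \<forall>x. norm (c t *v x) \<le> M * norm x"
  shows "\<forall>t\<in>{0..1}. norm (pic c v (Suc k) t - pic c v k t) \<le> norm v * (M * t) ^ Suc k / fact (Suc k)"
proof (induction k)
  case 0
  show ?case
  proof
    fix t :: real assume t: "t \<in> {0..1}"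
    have "norm (pic c v (Suc 0) t - pic c v 0 t) = norm (integral {0..t} (\<lambda>s. c s *v v))" by simp
    also have "\<dots> \<le> integral {0..t} (\<lambda>s. M * norm v)"
    proof (rule integral_norm_bound_integral)
      show "(\<lambda>s. c s *v v) integrable_on {0..t}"
        using t by (intro integ01 cont_mv c continuous_on_const)
      show "(\<lambda>s. M * norm v) integrable_on {0..t}" by (rule integrable_const_ivl)
      fix s assume "s \<in> {0..t}"
      then show "norm (c s *v v) \<le> M * norm v" using M t by auto
    qed
    also have "\<dots> = norm v * (M * t) ^ Suc 0 / fact (Suc 0)" using t by simp
    finally show "norm (pic c v (Suc 0) t - pic c v 0 t) \<le> norm v * (M * t) ^ Suc 0 / fact (Suc 0)" .
  qed
next
  case (Suc k)
  show ?case
  proof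
    fix t :: real assume t: "t \<in> {0..1}"
    have i1: "(\<lambda>s. c s *v pic c v (Suc k) s) integrable_on {0..t}"
      using t by (intro integ01 cont_mv c pic_cont)
    have i2: "(\<lambda>s. c s *v pic c v k s) integrable_on {0..t}"
      using t by (intro integ01 cont_mv c pic_cont)
    have "pic c v (Suc (Suc k)) t - pic c v (Suc k) t
        = integral {0..t} (\<lambda>s. c s *v pic c v (Suc k) s) - integral {0..t} (\<lambda>s. c s *v pic c v k s)"
      by (simp only: pic.simps) simp
    also have "\<dots> = integral {0..t} (\<lambda>s. c s *v (pic c v (Suc k) s - pic c v k s))"
      by (simp only: Henstock_Kurzweil_Integration.integral_diff[OF i1 i2, symmetric] matrix_vector_mult_diff_distrib)
    finally have eq: "pic c v (Suc (Suc k)) t - pic c v (Suc k) t = integral {0..t} (\<lambda>s. c s *v (pic c v (Suc k) s - pic c v k s))" .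
    have "norm (integral {0..t} (\<lambda>s. c s *v (pic c v (Suc k) s - pic c v k s)))
        \<le> integral {0..t} (\<lambda>s. M * (norm v * (M * s) ^ Suc k / fact (Suc k)))"
    proof (rule integral_norm_bound_integral)
      show "(\<lambda>s. c s *v (pic c v (Suc k) s - pic c v k s)) integrable_on {0..t}"
        using t by (intro integ01 cont_mv c pic_cont continuous_on_diff)
      show "(\<lambda>s. M * (norm v * (M * s) ^ Suc k / fact (Suc k))) integrable_on {0..t}"
        using pow_integral[of t M "norm v" k] t by (auto simp: integrable_on_def)
      fix s assume s: "s \<in> {0..t}"
      then have s01: "s \<in> {0..1}" using t by auto
      have "norm (c s *v (pic c v (Suc k) s - pic c v k s)) \<le> M * norm (pic c v (Suc k) s - pic c v k s)"
        using M s01 by blast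
      also have "\<dots> \<le> M * (norm v * (M * s) ^ Suc k / fact (Suc k))"
        using Suc s01 M by (intro mult_left_mono) auto
      finally show "norm (c s *v (pic c v (Suc k) s - pic c v k s)) \<le> M * (norm v * (M * s) ^ Suc k / fact (Suc k))" .
    qed
    also have "\<dots> = norm v * (M * t) ^ Suc (Suc k) / fact (Suc (Suc k))"
      using pow_integral[of t M "norm v" k] t by (intro integral_unique) auto
    finally show "norm (pic c v (Suc (Suc k)) t - pic c v (Suc k) t) \<le> norm v * (M * t) ^ Suc (Suc k) / fact (Suc (Suc k))"
      using eq by simp
  qed
qed


lemma ode_exists:
  fixes c :: "real \<Rightarrow> real^'n^'n"
  assumes c: "continuous_on {0..1} c"
  shows "\<exists>\<phi>. \<phi> 0 = v \<and> (\<forall>t\<in>{0..1}. (\<phi> has_vector_derivative c t *v \<phi> t) (at t within {0..1}))"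
proof -
  obtain M where M: "M \<ge> 0" "\<forall>t\<in>{0..1}. \<forall>x. norm (c t *v x) \<le> M * norm x"
    using mat_bound[OF c] by blast
  define u where "u j t = pic c v (Suc j) t - pic c v j t" for j t
  define b where "b j = norm v * (M * (inverse (fact j) * M ^ j))" for j
  have bnd: "norm (u j t) \<le> b j" if t: "t \<in> {0..1}" for j t
  proof -
    have "norm (u j t) \<le> norm v * (M * t) ^ Suc j / fact (Suc j)"
      using pic_diff[OF c M, of v j] t unfolding u_def by blast
    also have "\<dots> \<le> norm v * M ^ Suc j / fact (Suc j)"
    proof -
      have "(M * t) ^ Suc j \<le> M ^ Suc j"
        using t M by (intro power_mono) (auto simp: mult_left_le)
      then show ?thesis by (intro divide_right_mono mult_left_mono) auto
    qed
    also have "\<dots> \<le> norm v * M ^ Suc j / fact j"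
      by (intro divide_left_mono fact_mono) (auto intro!: mult_nonneg_nonneg M zero_le_power)
    also have "\<dots> = b j" by (simp add: b_def field_simps)
    finally show ?thesis .
  qed
  have sb: "summable b"
    unfolding b_def by (intro summable_mult summable_exp)
  have ul: "uniform_limit {0..1} (\<lambda>n t. \<Sum>j<n. u j t) (\<lambda>t. \<Sum>j. u j t) sequentially"
    by (rule Weierstrass_m_test[OF bnd sb])
  define \<phi> where "\<phi> t = v + (\<Sum>j. u j t)" for t
  have picsum: "pic c v n t = v + (\<Sum>j<n. u j t)" for n t
    unfolding u_def by (subst sum_lessThan_telescope) simp
  have ulp: "uniform_limit {0..1} (\<lambda>n. pic c v n) \<phi> sequentially"
    using ul unfolding uniform_limit_iff by (simp add: picsum \<phi>_def)
  have phic: "continuous_on {0..1} \<phi>"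
    by (rule uniform_limit_theorem[OF _ ulp]) (auto intro!: always_eventually pic_cont[OF c])
  have ulc: "uniform_limit {0..t} (\<lambda>n s. c s *v pic c v n s) (\<lambda>s. c s *v \<phi> s) sequentially"
    if t: "t \<in> {0..1}" for t
    unfolding uniform_limit_iff
  proof (intro allI impI)
    fix e :: real assume e: "e > 0"
    then have "e / (M + 1) > 0" using M by auto
    then have ev: "\<forall>\<^sub>F n in sequentially. \<forall>s\<in>{0..1}. dist (pic c v n s) (\<phi> s) < e / (M + 1)"
      using ulp unfolding uniform_limit_iff by blast
    show "\<forall>\<^sub>F n in sequentially. \<forall>s\<in>{0..t}. dist (c s *v pic c v n s) (c s *v \<phi> s) < e"
      using ev
    proof eventually_elim
      case (elim n)
      show ?case
      proof
        fix s assume "s \<in> {0..t}"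
        then have s: "s \<in> {0..1}" using t by auto
        have "dist (c s *v pic c v n s) (c s *v \<phi> s) = norm (c s *v (pic c v n s - \<phi> s))"
          by (simp add: dist_norm matrix_vector_mult_diff_distrib)
        also have "\<dots> \<le> M * norm (pic c v n s - \<phi> s)" using M s by blast
        also have "\<dots> \<le> M * (e / (M + 1))"
          using elim s M by (intro mult_left_mono) (auto simp: dist_norm less_imp_le)
        also have "\<dots> < e"
          using M e by (simp add: field_simps)
        finally show "dist (c s *v pic c v n s) (c s *v \<phi> s) < e" .
      qed
    qed
  qed
  have fixpt: "\<phi> t = v + integral {0..t} (\<lambda>s. c s *v \<phi> s)" if t: "t \<in> {0..1}" for t
  proof -
    have cc: "continuous_on {0..t} (\<lambda>s. c s *v pic c v n s)" for n
      using t by (intro cont_mv continuous_on_subset[OF c] continuous_on_subset[OF pic_cont[OF c]]) auto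
    obtain I J where I: "\<And>n. ((\<lambda>s. c s *v pic c v n s) has_integral I n) {0..t}"
      and J: "((\<lambda>s. c s *v \<phi> s) has_integral J) {0..t}" and IJ: "I \<longlonglongrightarrow> J"
      using uniform_limit_integral[OF ulc[OF t] cc] by auto
    have "(\<lambda>n. pic c v (Suc n) t) \<longlonglongrightarrow> v + J"
      using IJ by (simp add: integral_unique[OF I] tendsto_add_const_iff)
    moreover have "(\<lambda>n. pic c v (Suc n) t) \<longlonglongrightarrow> \<phi> t"
      using tendsto_uniform_limitI[OF ulp t] by (rule LIMSEQ_Suc)
    ultimately have "\<phi> t = v + J" using LIMSEQ_unique by blast
    then show ?thesis using J by (simp add: integral_unique)
  qed
  have gc: "continuous_on {0..1} (\<lambda>s. c s *v \<phi> s)" by (rule cont_mv[OF c phic])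
  show ?thesis
  proof (intro exI conjI ballI)
    show "\<phi> 0 = v" using fixpt[of 0] by simp
    fix t :: real assume t: "t \<in> {0..1}"
    have "((\<lambda>t. v + integral {0..t} (\<lambda>s. c s *v \<phi> s)) has_vector_derivative 0 + c t *v \<phi> t) (at t within {0..1})"
      by (intro has_vector_derivative_add has_vector_derivative_const integral_has_vector_derivative gc t)
    then have dd: "((\<lambda>t. v + integral {0..t} (\<lambda>s. c s *v \<phi> s)) has_vector_derivative c t *v \<phi> t) (at t within {0..1})"
      by simp
    show "(\<phi> has_vector_derivative c t *v \<phi> t) (at t within {0..1})"
      by (rule has_vector_derivative_transform[OF t _ dd]) (simp add: fixpt)
  qed
qed



definition rhs :: "(real^'d \<Rightarrow> real^'n^'d^'n) \<Rightarrow> real^'d \<Rightarrow> real^'d \<Rightarrow> real^'n \<Rightarrow> real^'n" where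
  "rhs B p u w = (\<chi> i. - (\<Sum>j\<in>UNIV. \<Sum>k\<in>UNIV. B p $ i $ j $ k * w $ k * u $ j))"

definition Mx :: "(real^'d \<Rightarrow> real^'n^'d^'n) \<Rightarrow> real^'d \<Rightarrow> real^'d \<Rightarrow> real^'n^'n" where
  "Mx B p u = (\<chi> i k. - (\<Sum>j\<in>UNIV. B p $ i $ j $ k * u $ j))"

lemma rhs_Mx: "rhs B p u w = Mx B p u *v w"
proof -
  have "- (\<Sum>j\<in>UNIV. \<Sum>k\<in>UNIV. B p $i$j$k * w$k * u$j) = (\<Sum>k\<in>UNIV. (- (\<Sum>j\<in>UNIV. B p $i$j$k * u$j)) * w$k)" for i
  proof -
    have "(\<Sum>k\<in>UNIV. (- (\<Sum>j\<in>UNIV. B p $i$j$k * u$j)) * w$k) = - (\<Sum>k\<in>UNIV. \<Sum>j\<in>UNIV. B p $i$j$k * u$j * w$k)"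
      by (simp add: sum_distrib_right sum_negf)
    also have "\<dots> = - (\<Sum>j\<in>UNIV. \<Sum>k\<in>UNIV. B p $i$j$k * u$j * w$k)" by (subst sum.swap) (rule refl)
    also have "\<dots> = - (\<Sum>j\<in>UNIV. \<Sum>k\<in>UNIV. B p $i$j$k * w$k * u$j)" by (simp add: ac_simps)
    finally show ?thesis by simp
  qed
  then show ?thesis unfolding rhs_def Mx_def matrix_vector_mult_def by (simp add: vec_eq_iff)
qed

lemma rhs_scale: "rhs B p (a *\<^sub>R u) w = a *\<^sub>R rhs B p u w"
  unfolding rhs_def by (simp add: vec_eq_iff sum_distrib_left ac_simps)

lemma tode_def2: "transport_ode B \<gamma> v \<phi> \<longleftrightarrow> \<phi> 0 = v \<and>
   (\<forall>t\<in>{0..1}. (\<phi> has_vector_derivative rhs B (\<gamma> t) (vector_derivative \<gamma> (at t within {0..1})) (\<phi> t)) (at t within {0..1}))"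
  unfolding transport_ode_def rhs_def ..

lemma pathsD:
  assumes "\<gamma> \<in> paths_C1 \<Omega> x y"
  obtains \<gamma>' where "continuous_on {0..1} \<gamma>'"
    "\<forall>t\<in>{0..1}. (\<gamma> has_vector_derivative \<gamma>' t) (at t within {0..1})"
    "\<forall>t\<in>{0..1}. vector_derivative \<gamma> (at t within {0..1}) = \<gamma>' t"
    "\<gamma> ` {0..1} \<subseteq> \<Omega>" "\<gamma> 0 = x" "\<gamma> 1 = y" "continuous_on {0..1} \<gamma>"
proof -
  from assms obtain \<gamma>' where g: "continuous_on {0..1} \<gamma>'"
    "\<forall>t\<in>{0..1}. (\<gamma> has_vector_derivative \<gamma>' t) (at t within {0..1})"
    "\<gamma> ` {0..1} \<subseteq> \<Omega>" "\<gamma> 0 = x" "\<gamma> 1 = y"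
    unfolding paths_C1_def by blast
  moreover have "\<forall>t\<in>{0..1}. vector_derivative \<gamma> (at t within {0..1}) = \<gamma>' t"
    using g(2) by (auto intro: vector_derivative_within_closed_interval)
  moreover have "continuous_on {0..1} \<gamma>"
    using g(2) by (auto simp: continuous_on_eq_continuous_within intro: has_vector_derivative_continuous)
  ultimately show ?thesis using that by blast
qed

lemma path_coef:
  assumes B: "continuous_on (closure \<Omega>) B" and g: "\<gamma> \<in> paths_C1 \<Omega> x y"
  obtains c :: "real \<Rightarrow> real^'n^'n" where "continuous_on {0..1} c"
    "\<And>t w. t \<in> {0..1} \<Longrightarrow> rhs B (\<gamma> t) (vector_derivative \<gamma> (at t within {0..1})) w = c t *v w"
proof -
  obtain \<gamma>' where g': "continuous_on {0..1} \<gamma>'"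
    "\<forall>t\<in>{0..1}. vector_derivative \<gamma> (at t within {0..1}) = \<gamma>' t"
    "\<gamma> ` {0..1} \<subseteq> \<Omega>" "continuous_on {0..1} \<gamma>"
    using pathsD[OF g] by metis
  have Bg: "continuous_on {0..1} (\<lambda>t. B (\<gamma> t))"
    by (rule continuous_on_compose2[OF B g'(4)]) (use g'(3) closure_subset in blast)
  have "continuous_on {0..1} (\<lambda>t. Mx B (\<gamma> t) (\<gamma>' t))"
    unfolding Mx_def
    by (intro continuous_on_vec_lambda continuous_on_minus continuous_on_sum continuous_on_mult
        continuous_on_component Bg g'(1))
  moreover have "rhs B (\<gamma> t) (vector_derivative \<gamma> (at t within {0..1})) w = Mx B (\<gamma> t) (\<gamma>' t) *v w"
    if "t \<in> {0..1}" for t w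
    using g'(2) that by (simp add: rhs_Mx)
  ultimately show ?thesis using that by blast
qed

lemma transport_exists:
  assumes B: "continuous_on (closure \<Omega>) B" and g: "\<gamma> \<in> paths_C1 \<Omega> x y"
  shows "\<exists>\<phi>. transport_ode B \<gamma> v \<phi>"
proof -
  obtain c where c: "continuous_on {0..1} c"
    "\<And>t w. t \<in> {0..1} \<Longrightarrow> rhs B (\<gamma> t) (vector_derivative \<gamma> (at t within {0..1})) w = c t *v w"
    using path_coef[OF B g] by metis
  obtain \<phi> where "\<phi> 0 = v" "\<forall>t\<in>{0..1}. (\<phi> has_vector_derivative c t *v \<phi> t) (at t within {0..1})"
    using ode_exists[OF c(1)] by blast
  then show ?thesis unfolding tode_def2 using c(2) by auto
qed

lemma transport_zero:
  assumes B: "continuous_on (closure \<Omega>) B" and g: "\<gamma> \<in> paths_C1 \<Omega> x y"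
    and d: "\<forall>t\<in>{0..1}. (\<phi> has_vector_derivative rhs B (\<gamma> t) (vector_derivative \<gamma> (at t within {0..1})) (\<phi> t)) (at t within {0..1})"
    and t0: "t0 \<in> {0..1}" "\<phi> t0 = 0" and t: "t \<in> {0..1}"
  shows "\<phi> t = 0"
proof -
  obtain c where c: "continuous_on {0..1} c"
    "\<And>t w. t \<in> {0..1} \<Longrightarrow> rhs B (\<gamma> t) (vector_derivative \<gamma> (at t within {0..1})) w = c t *v w"
    using path_coef[OF B g] by metis
  have "\<forall>t\<in>{0..1}. (\<phi> has_vector_derivative c t *v \<phi> t) (at t within {0..1})"
    using d c(2) by simp
  then show ?thesis using ode_zero[of c \<phi> t0 t] c(1) t0 t by blast
qed

lemma rhs_diff: "rhs B p u (a - b) = rhs B p u a - rhs B p u b"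
  by (simp add: rhs_Mx matrix_vector_mult_diff_distrib)

lemma rhs_add: "rhs B p u (a + b) = rhs B p u a + rhs B p u b"
  by (simp add: rhs_Mx matrix_vector_right_distrib)

lemma rhs_scaleR2: "rhs B p u (r *\<^sub>R a) = r *\<^sub>R rhs B p u a"
  by (simp add: rhs_Mx matrix_vector_mult_scaleR)

lemma transport_eq:
  assumes B: "continuous_on (closure \<Omega>) B" and g: "\<gamma> \<in> paths_C1 \<Omega> x y"
    and s: "transport_ode B \<gamma> v \<phi>"
  shows "transport B \<gamma> v = \<phi> 1"
  unfolding transport_def
proof (rule the_equality)
  show "\<exists>\<phi>'. transport_ode B \<gamma> v \<phi>' \<and> \<phi> 1 = \<phi>' 1" using s by blast
  fix w assume "\<exists>\<phi>'. transport_ode B \<gamma> v \<phi>' \<and> w = \<phi>' 1"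
  then obtain \<phi>' where s': "transport_ode B \<gamma> v \<phi>'" and w: "w = \<phi>' 1" by blast
  have "(\<lambda>t. \<phi>' t - \<phi> t) 1 = 0"
  proof (rule transport_zero[OF B g _ _ _])
    show "\<forall>t\<in>{0..1}. ((\<lambda>t. \<phi>' t - \<phi> t) has_vector_derivative rhs B (\<gamma> t) (vector_derivative \<gamma> (at t within {0..1})) (\<phi>' t - \<phi> t)) (at t within {0..1})"
      using s s' unfolding tode_def2 rhs_diff by (auto intro: has_vector_derivative_diff)
    show "(0::real) \<in> {0..1}" "(\<lambda>t. \<phi>' t - \<phi> t) 0 = 0" using s s' by (auto simp: tode_def2)
  qed simp
  then show "w = \<phi> 1" using w by simp
qed


lemma transport_linear:
  fixes B :: "real^'d \<Rightarrow> real^'n^'d^'n"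
  assumes B: "continuous_on (closure \<Omega>) B" and g: "\<gamma> \<in> paths_C1 \<Omega> x y"
  shows "linear (transport B \<gamma>)"
proof (rule linearI)
  fix a b :: "real^'n"
  obtain \<phi>a \<phi>b where sa: "transport_ode B \<gamma> a \<phi>a" and sb: "transport_ode B \<gamma> b \<phi>b"
    using transport_exists[OF B g] by metis
  have "transport_ode B \<gamma> (a + b) (\<lambda>t. \<phi>a t + \<phi>b t)"
    using sa sb unfolding tode_def2 rhs_add by (auto intro: has_vector_derivative_add)
  then show "transport B \<gamma> (a + b) = transport B \<gamma> a + transport B \<gamma> b"
    using transport_eq[OF B g] sa sb by simp
next
  fix r :: real and a :: "real^'n"
  obtain \<phi>a where sa: "transport_ode B \<gamma> a \<phi>a"
    using transport_exists[OF B g] by metis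
  have "transport_ode B \<gamma> (r *\<^sub>R a) (\<lambda>t. r *\<^sub>R \<phi>a t)"
    unfolding tode_def2 rhs_scaleR2
  proof (intro conjI ballI)
    show "r *\<^sub>R \<phi>a 0 = r *\<^sub>R a" using sa by (simp add: tode_def2)
    fix t :: real assume "t \<in> {0..1}"
    then have "(\<phi>a has_vector_derivative rhs B (\<gamma> t) (vector_derivative \<gamma> (at t within {0..1})) (\<phi>a t)) (at t within {0..1})"
      using sa by (simp add: tode_def2)
    then show "((\<lambda>t. r *\<^sub>R \<phi>a t) has_vector_derivative r *\<^sub>R rhs B (\<gamma> t) (vector_derivative \<gamma> (at t within {0..1})) (\<phi>a t)) (at t within {0..1})"
      by (rule has_vector_derivative_eq_rhs[OF has_vector_derivative_scaleR[OF DERIV_const]]) simp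
  qed
  then show "transport B \<gamma> (r *\<^sub>R a) = r *\<^sub>R transport B \<gamma> a"
    using transport_eq[OF B g] sa by simp
qed

lemma transport_inj:
  fixes B :: "real^'d \<Rightarrow> real^'n^'d^'n"
  assumes B: "continuous_on (closure \<Omega>) B" and g: "\<gamma> \<in> paths_C1 \<Omega> x y"
  shows "inj (transport B \<gamma>)"
  unfolding linear_inj_iff_eq_0[OF transport_linear[OF B g]]
proof (intro allI impI)
  fix v :: "real^'n" assume v: "transport B \<gamma> v = 0"
  obtain \<phi> where s: "transport_ode B \<gamma> v \<phi>"
    using transport_exists[OF B g] by metis
  have "\<phi> 1 = 0" using transport_eq[OF B g s] v by simp
  then have "\<phi> 0 = 0"
    using s unfolding tode_def2 by (intro transport_zero[OF B g, of \<phi> 1 0]) auto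
  then show "v = 0" using s by (simp add: tode_def2)
qed


definition hh :: "real \<Rightarrow> real" where "hh t = 3 * t^2 - 2 * t^3"
definition hdv :: "real \<Rightarrow> real" where "hdv t = 6 * t - 6 * t^2"

lemma hh_range: "t \<in> {0..1} \<Longrightarrow> hh t \<in> {0..1}"
proof -
  assume t: "t \<in> {0..1}"
  have "hh t = t^2 * (3 - 2*t)" by (simp add: hh_def algebra_simps power2_eq_square power3_eq_cube)
  moreover have "1 - hh t = (1-t)^2 * (1 + 2*t)" by (simp add: hh_def algebra_simps power2_eq_square power3_eq_cube)
  moreover have "0 \<le> t^2 * (3 - 2*t)" "0 \<le> (1-t)^2 * (1 + 2*t)" using t by auto
  ultimately show "hh t \<in> {0..1}" by auto
qed

lemma hh_01 [simp]: "hh 0 = 0" "hh 1 = 1" "hdv 0 = 0" "hdv 1 = 0"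
  by (simp_all add: hh_def hdv_def)

lemma hdv_half: "t * 2 = 1 \<Longrightarrow> hdv (2*t) = 0" "t * 2 = 1 \<Longrightarrow> hdv (2*t - 1) = 0"
proof -
  assume a: "t * 2 = 1"
  have "hdv (2*t) = 6 * (2*t) * (1 - t * 2)" by (simp add: hdv_def power2_eq_square algebra_simps)
  then show "hdv (2*t) = 0" using a by simp
  have "hdv (2*t - 1) = 6 * (2*t - 1) * (1 - (2*t - 1))" by (simp add: hdv_def power2_eq_square algebra_simps)
  then show "hdv (2*t - 1) = 0" using a by simp
qed

lemma q1_deriv: "((\<lambda>t. hh (2*t)) has_real_derivative 2 * hdv (2*t)) (at t within S)"
  unfolding hh_def hdv_def by (auto intro!: derivative_eq_intros simp: algebra_simps power2_eq_square)

lemma q2_deriv: "((\<lambda>t. hh (2*t - 1)) has_real_derivative 2 * hdv (2*t - 1)) (at t within S)"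
  unfolding hh_def hdv_def by (auto intro!: derivative_eq_intros simp: algebra_simps power2_eq_square)

lemma reparam:
  fixes f :: "real \<Rightarrow> 'a::real_normed_vector"
  assumes f: "\<forall>s\<in>{0..1}. (f has_vector_derivative f' s) (at s within {0..1})"
    and q: "(q has_real_derivative q' t) (at t within S)" and qS: "q ` S \<subseteq> {0..1}" and t: "t \<in> S"
  shows "((\<lambda>t. f (q t)) has_vector_derivative q' t *\<^sub>R f' (q t)) (at t within S)"
proof -
  have "(q has_vector_derivative q' t) (at t within S)"
    using q by (simp add: has_real_derivative_iff_has_vector_derivative)
  moreover have "(f has_vector_derivative f' (q t)) (at (q t) within q ` S)"
    using f qS t by (intro has_vector_derivative_within_subset[OF _ qS]) auto
  ultimately show ?thesis by (drule_tac vector_diff_chain_within) (simp_all add: o_def)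
qed

lemma glue:
  fixes f g :: "real \<Rightarrow> 'a::real_normed_vector"
  assumes f: "\<And>t. t \<in> {0..1/2} \<Longrightarrow> (f has_vector_derivative f' t) (at t within {0..1/2})"
    and g: "\<And>t. t \<in> {1/2..1} \<Longrightarrow> (g has_vector_derivative g' t) (at t within {1/2..1})"
    and e: "f (1/2) = g (1/2)" "f' (1/2) = g' (1/2)" and t: "t \<in> {0..1}"
  shows "((\<lambda>t. if t \<le> 1/2 then f t else g t) has_vector_derivative (if t \<le> 1/2 then f' t else g' t)) (at t within {0..1})"
proof -
  have cl: "closure {0..1/2::real} = {0..1/2}" "closure {1/2<..1::real} = {1/2..1}"
    by (simp_all add: closure_greaterThanAtMost)
  have s1: "{0..1/2} \<union> (closure {0..1/2} \<inter> closure {1/2<..1}) = {0..1/2::real}" by (auto simp: cl)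
  have s2: "{1/2<..1} \<union> (closure {0..1/2} \<inter> closure {1/2<..1}) = {1/2..1::real}" by (auto simp: cl)
  have u: "{0..1} = {0..1/2} \<union> {1/2<..1::real}" by auto
  have "((\<lambda>x. if x \<in> {0..1/2} then f x else g x) has_vector_derivative (if t \<in> {0..1/2} then f' t else g' t)) (at t within {0..1})"
  proof (rule has_vector_derivative_If_within_closures[OF _ u])
    show "t \<in> {0..1/2} \<union> {1/2<..1}" using t by auto
    show "(f has_vector_derivative f' t) (at t within {0..1/2} \<union> (closure {0..1/2} \<inter> closure {1/2<..1}))"
      if "t \<in> {0..1/2} \<union> (closure {0..1/2} \<inter> closure {1/2<..1})"
      using that unfolding s1 using f by blast
    show "(g has_vector_derivative g' t) (at t within {1/2<..1} \<union> (closure {0..1/2} \<inter> closure {1/2<..1}))"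
      if "t \<in> {1/2<..1} \<union> (closure {0..1/2} \<inter> closure {1/2<..1})"
      using that unfolding s2 using g by blast
    show "f t = g t" if "t \<in> closure {0..1/2}" "t \<in> closure {1/2<..1}"
    proof -
      have "t = 1/2" using that unfolding cl by auto
      then show ?thesis using e by metis
    qed
    show "f' t = g' t" if "t \<in> closure {0..1/2}" "t \<in> closure {1/2<..1}"
    proof -
      have "t = 1/2" using that unfolding cl by auto
      then show ?thesis using e by metis
    qed
  qed
  moreover have "(if t \<in> {0..1/2} then f' t else g' t) = (if t \<le> 1/2 then f' t else g' t)" using t by auto
  ultimately have d: "((\<lambda>x. if x \<in> {0..1/2} then f x else g x) has_vector_derivative (if t \<le> 1/2 then f' t else g' t)) (at t within {0..1})"
    by simp
  show ?thesis by (rule has_vector_derivative_transform[OF t _ d]) auto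
qed

definition jn :: "(real \<Rightarrow> 'a) \<Rightarrow> (real \<Rightarrow> 'a) \<Rightarrow> real \<Rightarrow> 'a" where
  "jn f g t = (if t \<le> 1/2 then f (hh (2*t)) else g (hh (2*t - 1)))"

definition jnd :: "(real \<Rightarrow> 'a::real_vector) \<Rightarrow> (real \<Rightarrow> 'a) \<Rightarrow> real \<Rightarrow> 'a" where
  "jnd f' g' t = (if t \<le> 1/2 then (2 * hdv (2*t)) *\<^sub>R f' (hh (2*t)) else (2 * hdv (2*t - 1)) *\<^sub>R g' (hh (2*t - 1)))"

lemma jn_deriv:
  fixes f g :: "real \<Rightarrow> 'a::real_normed_vector"
  assumes f: "\<forall>s\<in>{0..1}. (f has_vector_derivative f' s) (at s within {0..1})"
    and g: "\<forall>s\<in>{0..1}. (g has_vector_derivative g' s) (at s within {0..1})"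
    and e: "f 1 = g 0" and t: "t \<in> {0..1}"
  shows "(jn f g has_vector_derivative jnd f' g' t) (at t within {0..1})"
proof -
  have r1: "(\<lambda>t. hh (2*t)) ` {0..1/2} \<subseteq> {0..1}" using hh_range by auto
  have r2: "(\<lambda>t. hh (2*t - 1)) ` {1/2..1} \<subseteq> {0..1}" using hh_range by auto
  have d1: "((\<lambda>t. f (hh (2*t))) has_vector_derivative (2 * hdv (2 * s)) *\<^sub>R f' (hh (2 * s))) (at s within {0..1/2})"
    if "s \<in> {0..1/2}" for s
    using reparam[where q'="\<lambda>t. 2 * hdv (2*t)" and q="\<lambda>t. hh (2*t)", OF f q1_deriv r1 that] by simp
  have d2: "((\<lambda>t. g (hh (2*t - 1))) has_vector_derivative (2 * hdv (2 * s - 1)) *\<^sub>R g' (hh (2 * s - 1))) (at s within {1/2..1})"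
    if "s \<in> {1/2..1}" for s
    using reparam[where q'="\<lambda>t. 2 * hdv (2*t - 1)" and q="\<lambda>t. hh (2*t - 1)", OF g q2_deriv r2 that] by simp
  show ?thesis
    unfolding jn_def jnd_def
    by (rule glue[OF d1 d2]) (use e t in auto)
qed

lemma jn_path:
  assumes a: "\<alpha> \<in> paths_C1 \<Omega> x y" and b: "\<beta> \<in> paths_C1 \<Omega> y z"
  shows "jn \<alpha> \<beta> \<in> paths_C1 \<Omega> x z"
proof -
  obtain \<alpha>' where a': "continuous_on {0..1} \<alpha>'"
    "\<forall>t\<in>{0..1}. (\<alpha> has_vector_derivative \<alpha>' t) (at t within {0..1})"
    "\<alpha> ` {0..1} \<subseteq> \<Omega>" "\<alpha> 0 = x" "\<alpha> 1 = y"
    using pathsD[OF a] by metis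
  obtain \<beta>' where b': "continuous_on {0..1} \<beta>'"
    "\<forall>t\<in>{0..1}. (\<beta> has_vector_derivative \<beta>' t) (at t within {0..1})"
    "\<beta> ` {0..1} \<subseteq> \<Omega>" "\<beta> 0 = y" "\<beta> 1 = z"
    using pathsD[OF b] by metis
  have r1: "(\<lambda>t. hh (2*t)) ` {0..1/2} \<subseteq> {0..1}" using hh_range by auto
  have r2: "(\<lambda>t. hh (2*t - 1)) ` {1/2..1} \<subseteq> {0..1}" using hh_range by auto
  have c1: "continuous_on {0..1/2} (\<lambda>t. (2 * hdv (2*t)) *\<^sub>R \<alpha>' (hh (2*t)))"
    by (intro continuous_intros continuous_on_compose2[OF a'(1) _ r1]) (auto simp: hdv_def hh_def intro!: continuous_intros)
  have c2: "continuous_on {1/2..1} (\<lambda>t. (2 * hdv (2*t - 1)) *\<^sub>R \<beta>' (hh (2*t - 1)))"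
    by (intro continuous_intros continuous_on_compose2[OF b'(1) _ r2]) (auto simp: hdv_def hh_def intro!: continuous_intros)
  have "continuous_on {0..1} (jnd \<alpha>' \<beta>')"
    unfolding jnd_def
    by (rule continuous_on_cases_le[where h="\<lambda>t. t", OF continuous_on_subset[OF c1] continuous_on_subset[OF c2]])
       (auto intro: continuous_on_id simp: hdv_half)
  moreover have "\<forall>t\<in>{0..1}. (jn \<alpha> \<beta> has_vector_derivative jnd \<alpha>' \<beta>' t) (at t within {0..1})"
    using jn_deriv[OF a'(2) b'(2)] a'(5) b'(4) by auto
  moreover have "jn \<alpha> \<beta> ` {0..1} \<subseteq> \<Omega>"
  proof
    fix p assume "p \<in> jn \<alpha> \<beta> ` {0..1}"
    then obtain t where t: "t \<in> {0..1}" "p = jn \<alpha> \<beta> t" by auto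
    show "p \<in> \<Omega>"
    proof (cases "t \<le> 1/2")
      case True
      then have "hh (2*t) \<in> {0..1}" using t hh_range by auto
      then show ?thesis using a'(3) t True by (auto simp: jn_def)
    next
      case False
      then have "hh (2*t - 1) \<in> {0..1}" using t hh_range by auto
      then show ?thesis using b'(3) t False by (auto simp: jn_def)
    qed
  qed
  moreover have "jn \<alpha> \<beta> 0 = x" "jn \<alpha> \<beta> 1 = z" using a'(4) b'(5) by (simp_all add: jn_def)
  ultimately show ?thesis unfolding paths_C1_def by blast
qed


lemma jn_transport:
  fixes B :: "real^'d \<Rightarrow> real^'n^'d^'n"
  assumes B: "continuous_on (closure \<Omega>) B"
    and a: "\<alpha> \<in> paths_C1 \<Omega> x y" and b: "\<beta> \<in> paths_C1 \<Omega> y z"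
  shows "transport B (jn \<alpha> \<beta>) v = transport B \<beta> (transport B \<alpha> v)"
proof -
  obtain \<alpha>' where a': "\<forall>t\<in>{0..1}. (\<alpha> has_vector_derivative \<alpha>' t) (at t within {0..1})"
    "\<forall>t\<in>{0..1}. vector_derivative \<alpha> (at t within {0..1}) = \<alpha>' t" "\<alpha> 1 = y"
    using pathsD[OF a] by metis
  obtain \<beta>' where b': "\<forall>t\<in>{0..1}. (\<beta> has_vector_derivative \<beta>' t) (at t within {0..1})"
    "\<forall>t\<in>{0..1}. vector_derivative \<beta> (at t within {0..1}) = \<beta>' t" "\<beta> 0 = y"
    using pathsD[OF b] by metis
  have J: "jn \<alpha> \<beta> \<in> paths_C1 \<Omega> x z" by (rule jn_path[OF a b])
  have Jd: "vector_derivative (jn \<alpha> \<beta>) (at t within {0..1}) = jnd \<alpha>' \<beta>' t" if "t \<in> {0..1}" for t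
    using jn_deriv[OF a'(1) b'(1)] a'(3) b'(3) that
    by (intro vector_derivative_within_closed_interval) auto
  obtain \<phi>a where sa: "transport_ode B \<alpha> v \<phi>a" using transport_exists[OF B a] by metis
  obtain \<phi>b where sb: "transport_ode B \<beta> (\<phi>a 1) \<phi>b" using transport_exists[OF B b] by metis
  let ?fa = "\<lambda>s. rhs B (\<alpha> s) (\<alpha>' s) (\<phi>a s)"
  let ?fb = "\<lambda>s. rhs B (\<beta> s) (\<beta>' s) (\<phi>b s)"
  have da: "\<forall>s\<in>{0..1}. (\<phi>a has_vector_derivative ?fa s) (at s within {0..1})"
    using sa a'(2) unfolding tode_def2 by simp
  have db: "\<forall>s\<in>{0..1}. (\<phi>b has_vector_derivative ?fb s) (at s within {0..1})"
    using sb b'(2) unfolding tode_def2 by simp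
  have "transport_ode B (jn \<alpha> \<beta>) v (jn \<phi>a \<phi>b)"
    unfolding tode_def2
  proof (intro conjI ballI)
    show "jn \<phi>a \<phi>b 0 = v" using sa by (simp add: jn_def tode_def2)
    fix t :: real assume t: "t \<in> {0..1}"
    have "(jn \<phi>a \<phi>b has_vector_derivative jnd ?fa ?fb t) (at t within {0..1})"
      using jn_deriv[OF da db _ t] sb by (simp add: tode_def2)
    moreover have "jnd ?fa ?fb t = rhs B (jn \<alpha> \<beta> t) (jnd \<alpha>' \<beta>' t) (jn \<phi>a \<phi>b t)"
      by (simp add: jnd_def jn_def rhs_scale)
    ultimately show "(jn \<phi>a \<phi>b has_vector_derivative rhs B (jn \<alpha> \<beta> t) (vector_derivative (jn \<alpha> \<beta>) (at t within {0..1})) (jn \<phi>a \<phi>b t)) (at t within {0..1})"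
      using Jd[OF t] by simp
  qed
  then have "transport B (jn \<alpha> \<beta>) v = jn \<phi>a \<phi>b 1" by (rule transport_eq[OF B J])
  also have "\<dots> = \<phi>b 1" by (simp add: jn_def)
  also have "\<dots> = transport B \<beta> (\<phi>a 1)" by (rule transport_eq[OF B b sb, symmetric])
  also have "\<phi>a 1 = transport B \<alpha> v" by (rule transport_eq[OF B a sa, symmetric])
  finally show ?thesis .
qed

lemma transport_E:
  fixes B :: "real^'d \<Rightarrow> real^'n^'d^'n"
  assumes B: "continuous_on (closure \<Omega>) B" and s: "\<sigma> \<in> paths_C1 \<Omega> x y"
  shows "transport B \<sigma> ` E_B \<Omega> B x \<subseteq> E_B \<Omega> B y"
proof
  fix w assume "w \<in> transport B \<sigma> ` E_B \<Omega> B x"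
  then obtain v where v: "v \<in> E_B \<Omega> B x" and w: "w = transport B \<sigma> v" by auto
  show "w \<in> E_B \<Omega> B y"
    unfolding E_B_def
  proof (intro CollectI ballI)
    fix z \<gamma>1 \<gamma>2 assume z: "z \<in> \<Omega>" and g1: "\<gamma>1 \<in> paths_C1 \<Omega> y z" and g2: "\<gamma>2 \<in> paths_C1 \<Omega> y z"
    have "transport B \<gamma>1 w = transport B (jn \<sigma> \<gamma>1) v" using jn_transport[OF B s g1] w by simp
    also have "\<dots> = transport B (jn \<sigma> \<gamma>2) v"
      using v z jn_path[OF s g1] jn_path[OF s g2] unfolding E_B_def by blast
    also have "\<dots> = transport B \<gamma>2 w" using jn_transport[OF B s g2] w by simp
    finally show "transport B \<gamma>1 w = transport B \<gamma>2 w" .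
  qed
qed

lemma dim_le:
  fixes B :: "real^'d \<Rightarrow> real^'n^'d^'n"
  assumes B: "continuous_on (closure \<Omega>) B" and s: "\<sigma> \<in> paths_C1 \<Omega> x y"
  shows "dim (E_B \<Omega> B x) \<le> dim (E_B \<Omega> B y)"
proof -
  let ?T = "transport B \<sigma>"
  obtain g where g: "linear g" "g \<circ> ?T = id"
    using linear_injective_left_inverse[OF transport_linear[OF B s] transport_inj[OF B s]] by blast
  have "E_B \<Omega> B x = g ` (?T ` E_B \<Omega> B x)"
    by (simp add: image_comp g(2))
  then have "dim (E_B \<Omega> B x) \<le> dim (?T ` E_B \<Omega> B x)"
    using dim_image_le[OF g(1)] by metis
  also have "\<dots> \<le> dim (E_B \<Omega> B y)"
    by (rule dim_subset[OF transport_E[OF B s]])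
  finally show ?thesis .
qed

lemma seg_path:
  assumes "\<forall>t\<in>{0..1}. x + t *\<^sub>R (y - x) \<in> \<Omega>"
  shows "(\<lambda>t. x + t *\<^sub>R (y - x)) \<in> paths_C1 \<Omega> x y"
  unfolding paths_C1_def
proof (intro CollectI conjI exI ballI)
  show "continuous_on {0..1} (\<lambda>t. y - x)" by (rule continuous_on_const)
  fix t :: real
  show "((\<lambda>t. x + t *\<^sub>R (y - x)) has_vector_derivative y - x) (at t within {0..1})"
    by (auto intro!: derivative_eq_intros)
qed (use assms in auto)


theorem proposition4p6:
  fixes \<Omega> :: "(real^'d) set" and B :: "real^'d \<Rightarrow> real^'n^'d^'n"
  assumes "bounded \<Omega>" "connected \<Omega>" "open \<Omega>" "smooth_boundary \<Omega>"
    and "continuous_on (closure \<Omega>) B"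
    and "x1 \<in> \<Omega>" "x2 \<in> \<Omega>"
  shows "dim (E_B \<Omega> B x1) = dim (E_B \<Omega> B x2)"
proof (rule connected_equivalence_relation[where R="\<lambda>a b. dim (E_B \<Omega> B a) = dim (E_B \<Omega> B b)",
      OF assms(2) assms(6) assms(7)])
  fix a assume a: "a \<in> \<Omega>"
  obtain r where r: "r > 0" "ball a r \<subseteq> \<Omega>" using assms(3) a open_contains_ball by blast
  show "\<exists>T. openin (top_of_set \<Omega>) T \<and> a \<in> T \<and> (\<forall>x\<in>T. dim (E_B \<Omega> B a) = dim (E_B \<Omega> B x))"
  proof (intro exI conjI ballI)
    show "openin (top_of_set \<Omega>) (ball a r)" by (rule open_subset[OF r(2) open_ball])
    show "a \<in> ball a r" using r by simp
    fix y assume y: "y \<in> ball a r"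
    have p1: "\<forall>t\<in>{0..1}. a + t *\<^sub>R (y - a) \<in> \<Omega>"
    proof
      fix t :: real assume t: "t \<in> {0..1}"
      have "dist a (a + t *\<^sub>R (y - a)) = t * dist a y"
        using t by (simp add: dist_norm norm_minus_commute)
      also have "\<dots> \<le> dist a y" using t by (simp add: mult_left_le_one_le)
      finally have "a + t *\<^sub>R (y - a) \<in> ball a r" using y by simp
      then show "a + t *\<^sub>R (y - a) \<in> \<Omega>" using r by blast
    qed
    have p2: "\<forall>t\<in>{0..1}. y + t *\<^sub>R (a - y) \<in> \<Omega>"
    proof
      fix t :: real assume t: "t \<in> {0..1}"
      have "a - (y + t *\<^sub>R (a - y)) = (1 - t) *\<^sub>R (a - y)" by (simp add: algebra_simps)
      then have "dist a (y + t *\<^sub>R (a - y)) = (1 - t) * dist a y"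
        using t by (simp add: dist_norm)
      also have "\<dots> \<le> dist a y" using t by (simp add: mult_left_le_one_le)
      finally have "y + t *\<^sub>R (a - y) \<in> ball a r" using y by simp
      then show "y + t *\<^sub>R (a - y) \<in> \<Omega>" using r by blast
    qed
    show "dim (E_B \<Omega> B a) = dim (E_B \<Omega> B y)"
      using dim_le[OF assms(5) seg_path[OF p1]] dim_le[OF assms(5) seg_path[OF p2]] by simp
  qed
qed auto

end
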